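(* Let $(X,\le)$ be a non-empty strictly inductive poset, let $f:X\to X$ and $a_0\in X$, let $(a_k)_k$ be the transfinite sequence of iterates of $f$ from $a_0$, and let $A=\{a_k\mid k \text{ an ordinal}\}$. Suppose $a_0\le f(a_0)$ and that for all $x,y\in A$, if $x\le f(x)\le y$ then $f(x)\le f(y)$. Then the sequence is monotone: $a_k\le a_l$ whenever $k<l$.
   Context: A poset is strictly inductive if every non-empty chain (totally ordered subset) has a least upper bound $\mathrm{lub}$ in $X$. The transfinite iterates are defined by $a_0$ given, $a_{k+1}=f(a_k)$, and $a_l=\mathrm{lub}\{a_k\mid k<l\}$ for limit ordinals $l$. *)

theory Defs
  imports Main
begin

text \<open>Least upper bound of a set in a partial order (the poset X is the whole type).\<close>
definition is_lub :: "'a::order set \<Rightarrow> 'a \<Rightarrow> bool" where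
  "is_lub S u \<longleftrightarrow> (\<forall>x\<in>S. x \<le> u) \<and> (\<forall>v. (\<forall>x\<in>S. x \<le> v) \<longrightarrow> u \<le> v)"

definition strictly_inductive :: "'a::order itself \<Rightarrow> bool" where
  "strictly_inductive _ \<longleftrightarrow>
     (\<forall>S::'a set. S \<noteq> {} \<and> Complete_Partial_Order.chain (\<le>) S \<longrightarrow> (\<exists>u. is_lub S u))"

text \<open>Ordinals are represented by the elements of an arbitrary well-ordered index type 'o.
  The sequence a is the transfinite iterate sequence of f from a0:
  a at the least index is a0, a at the successor of k is f (a k),
  and a at a limit index l is the lub of {a k | k < l}.\<close>
definition transfinite_iterates ::
    "('a::order \<Rightarrow> 'a) \<Rightarrow> 'a \<Rightarrow> ('o::wellorder \<Rightarrow> 'a) \<Rightarrow> bool" where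
  "transfinite_iterates f a0 a \<longleftrightarrow>
     (\<forall>k. (\<forall>j. \<not> j < k) \<longrightarrow> a k = a0) \<and>
     (\<forall>k l. k < l \<and> (\<forall>j. \<not> (k < j \<and> j < l)) \<longrightarrow> a l = f (a k)) \<and>
     (\<forall>l. (\<exists>j. j < l) \<and> (\<forall>k<l. \<exists>j. k < j \<and> j < l) \<longrightarrow> is_lub {a k | k. k < l} (a l))"

end

theory Submission
  imports Defs
begin

theorem mainTheorem2:
  fixes f :: "'a::order \<Rightarrow> 'a" and a0 :: 'a and a :: "'o::wellorder \<Rightarrow> 'a"
  assumes "strictly_inductive TYPE('a)"
    and "transfinite_iterates f a0 a"
    and "a0 \<le> f a0"
    and "\<forall>x\<in>range a. \<forall>y\<in>range a. x \<le> f x \<and> f x \<le> y \<longrightarrow> f x \<le> f y"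
  shows "\<forall>k l. k < l \<longrightarrow> a k \<le> a l"
proof -
  note T = assms(2)[unfolded transfinite_iterates_def]
  have B: "\<forall>k l. k < l \<and> (\<forall>j. \<not> (k < j \<and> j < l)) \<longrightarrow> a l = f (a k)" using T by blast
  have L: "\<And>l. (\<exists>j. j < l) \<Longrightarrow> (\<forall>k<l. \<exists>j. k < j \<and> j < l) \<Longrightarrow> is_lub {a k | k. k < l} (a l)"
    using T by blast
  have MM: "\<And>p q. a p \<le> f (a p) \<Longrightarrow> f (a p) \<le> a q \<Longrightarrow> f (a p) \<le> f (a q)"
    using assms(4) by blast
  have Q: "(\<forall>k<l. a k \<le> a l) \<and> a l \<le> f (a l)" for l
  proof (induction l rule: less_induct)
    case (less l)
    show ?case
    proof (cases "\<exists>j. j < l")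
      case False
      then have "a l = a0" using T by blast
      then show ?thesis using False assms(3) by simp
    next
      case True
      show ?thesis
      proof (cases "\<exists>k<l. \<forall>j. \<not> (k < j \<and> j < l)")
        case True
        then obtain k where k: "k < l" "\<forall>j. \<not> (k < j \<and> j < l)" by blast
        have al: "a l = f (a k)" using B k by blast
        have ak: "a k \<le> a l" using less.IH[OF k(1)] al by simp
        have p1: "\<forall>j<l. a j \<le> a l"
        proof (intro allI impI)
          fix j assume "j < l"
          then have "j < k \<or> j = k" using k(2) by (metis neqE)
          then show "a j \<le> a l" using less.IH[OF k(1)] ak order_trans by blast
        qed
        have "f (a k) \<le> f (a l)" using MM[of k l] less.IH[OF k(1)] al by simp
        then show ?thesis using p1 al by simp
      next
        case False
        then have lim: "\<forall>k<l. \<exists>j. k < j \<and> j < l" by blast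
        have lub: "is_lub {a k | k. k < l} (a l)" using L True lim by blast
        have p1: "\<forall>k<l. a k \<le> a l" using lub unfolding is_lub_def by blast
        have "\<forall>x\<in>{a k | k. k < l}. x \<le> f (a l)"
        proof safe
          fix k assume kl: "k < l"
          define s where "s = (LEAST j. k < j)"
          obtain j where j: "k < j" "j < l" using lim kl by blast
          have ks: "k < s" unfolding s_def using LeastI[where P="\<lambda>i. k < i", OF j(1)] by simp
          have sj: "s \<le> j" unfolding s_def using Least_le[where P="\<lambda>i. k < i", OF j(1)] by simp
          have sl: "s < l" using sj j(2) by simp
          have btw: "\<forall>i. \<not> (k < i \<and> i < s)" unfolding s_def using not_less_Least by blast
          have as: "a s = f (a k)" using B ks btw by blast
          have "f (a k) \<le> a l" using p1 sl as by metis
          then have "f (a k) \<le> f (a l)" using MM[of k l] less.IH[OF kl] by simp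
          then show "a k \<le> f (a l)" using less.IH[OF kl] order_trans by blast
        qed
        then have "a l \<le> f (a l)" using lub unfolding is_lub_def by blast
        then show ?thesis using p1 by simp
      qed
    qed
  qed
  then show ?thesis by blast
qed

end
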